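(* Let $\mathbb{A}_1,\ldots,\mathbb{A}_n,\mathbb{B}$ be sized CPOs with sets of maximal elements $A_1,\ldots,A_n,B$ and size ordinals $\zeta_{\mathbb{A}_1},\ldots,\zeta_{\mathbb{A}_n},\zeta_{\mathbb{B}}$, and let $A=A_1\times\cdots\times A_n$. Let $h:A_1\times\cdots\times A_n\times B^m\to B$ and $g_i:A\to A$ ($i=1,\ldots,m$) with $g_i(x_1,\ldots,x_n)=\langle g_i^1(x_1,\ldots,x_n),\ldots,g_i^n(x_1,\ldots,x_n)\rangle$, where $g_i^j:A\to A_j$. Let $\eta_h$ be a production function for $h$ and $\eta_{i,j}$ a production function for $g_i^j$ ($i=1,\ldots,m$, $j=1,\ldots,n$). Assume that $\eta_h(\zeta_{\mathbb{A}_1},\ldots,\zeta_{\mathbb{A}_n},\beta_1,\ldots,\beta_m)>\min_{i=1,\ldots,m}\beta_i$ for all $\beta_1,\ldots,\beta_m\le\zeta_{\mathbb{B}}$ with $\beta_i<\zeta_{\mathbb{B}}$ for some $i$. If $f:A\to B$ is a function defined by corecursion from $h$ and $g_1,\ldots,g_m$, then there exists a production function $\eta_f$ for $f$ satisfying, for all $\bar\alpha\in\mathrm{On}(\zeta_{\mathbb{A}_1})\times\cdots\times\mathrm{On}(\zeta_{\mathbb{A}_n})$, $$\eta_f(\bar\alpha)=\eta_h\big(\bar\alpha,\ \eta_f(\eta_{1,1}(\bar\alpha),\ldots,\eta_{1,n}(\bar\alpha)),\ \ldots,\ \eta_f(\eta_{m,1}(\bar\alpha),\ldots,\eta_{m,n}(\bar\alpha))\big).$$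 Moreover, if $\eta_h$ and all $\eta_{i,j}$ are continuous, then so is $\eta_f$.
   Context: A CPO is a partial order with a least element in which every directed set has a supremum; a function between CPOs is continuous if it maps directed sets to directed sets and preserves their suprema; products of CPOs are ordered componentwise. For an ordinal $\zeta$, $\mathrm{On}(\zeta)$ is the set of ordinals $\le\zeta$ with the usual order. A sized CPO is a tuple $\langle\mathbb{A},\zeta,s,\mathtt{cut}\rangle$ where $\mathbb{A}$ is a CPO, $\zeta$ an ordinal (the size ordinal), $s:\mathbb{A}\to\mathrm{On}(\zeta)$ (size function) and $\mathtt{cut}:\mathrm{On}(\zeta)\times\mathbb{A}\to\mathbb{A}$, such that for $x\in\mathbb{A}$, $\alpha\le\zeta$: $s$ is surjective and continuous; $s(x)=\zeta$ iff $x$ is maximal in $\mathbb{A}$; $\mathtt{cut}$ is monotone in both arguments; $s(\mathtt{cut}(\alpha,x))=\alpha$ if $s(x)>\alpha$; $\mathtt{cut}(\alpha,x)=x$ if $s(x)\le\alpha$. A function between CPOs is regular if it is monotone and maps maximal elements to maximal elements. Given sized CPOs $\mathbb{A}_1,\ldots,\mathbb{A}_k,\mathbb{B}$ with sets of maximal elements $A_1,\ldots,A_k,B$, a production function for $f:A_1\times\cdots\times A_k\to B$ is any function $\eta:\mathrm{On}(\zeta_{\mathbb{A}_1})\times\cdots\times\mathrm{On}(\zeta_{\mathbb{A}_k})\to\mathrm{On}(\zeta_{\mathbb{B}})$ such that there is a regular $f^*:\mathbb{A}_1\times\cdots\times\mathbb{A}_k\to\mathbb{B}$ extending $f$ with $\eta(s(x_1),\ldots,s(x_k))=s(f^*(x_1,\ldots,x_k))$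 for all $x_i\in\mathbb{A}_i$. A function $f:S\to Q$ is defined by corecursion from $h:S\times Q^m\to Q$ and $g_i:S\to S$ if it is the unique function in $Q^S$ satisfying $f(x)=h(x,f(g_1(x)),\ldots,f(g_m(x)))$ for all $x\in S$. *)

theory Defs
  imports Main
begin

text \<open>Ordinals are modelled as elements of a well-ordered type 'o.\<close>

record ('a, 'o) scpo =
  car  :: "'a set"
  le   :: "'a \<Rightarrow> 'a \<Rightarrow> bool"
  zeta :: 'o
  sz   :: "'a \<Rightarrow> 'o"
  cut  :: "'o \<Rightarrow> 'a \<Rightarrow> 'a"

definition is_partial_order :: "'a set \<Rightarrow> ('a \<Rightarrow> 'a \<Rightarrow> bool) \<Rightarrow> bool" where
  "is_partial_order C r \<longleftrightarrow>
     (\<forall>x\<in>C. r x x) \<and>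
     (\<forall>x\<in>C. \<forall>y\<in>C. r x y \<and> r y x \<longrightarrow> x = y) \<and>
     (\<forall>x\<in>C. \<forall>y\<in>C. \<forall>z\<in>C. r x y \<and> r y z \<longrightarrow> r x z)"

definition directed :: "'a set \<Rightarrow> ('a \<Rightarrow> 'a \<Rightarrow> bool) \<Rightarrow> 'a set \<Rightarrow> bool" where
  "directed C r D \<longleftrightarrow> D \<subseteq> C \<and> D \<noteq> {} \<and> (\<forall>x\<in>D. \<forall>y\<in>D. \<exists>z\<in>D. r x z \<and> r y z)"

definition is_lub :: "'a set \<Rightarrow> ('a \<Rightarrow> 'a \<Rightarrow> bool) \<Rightarrow> 'a set \<Rightarrow> 'a \<Rightarrow> bool" where
  "is_lub C r D u \<longleftrightarrow> u \<in> C \<and> (\<forall>x\<in>D. r x u) \<and> (\<forall>v\<in>C. (\<forall>x\<in>D. r x v) \<longrightarrow> r u v)"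

definition is_cpo :: "'a set \<Rightarrow> ('a \<Rightarrow> 'a \<Rightarrow> bool) \<Rightarrow> bool" where
  "is_cpo C r \<longleftrightarrow> is_partial_order C r \<and> (\<exists>b\<in>C. \<forall>x\<in>C. r b x) \<and>
     (\<forall>D. directed C r D \<longrightarrow> (\<exists>u. is_lub C r D u))"

definition maximal :: "'a set \<Rightarrow> ('a \<Rightarrow> 'a \<Rightarrow> bool) \<Rightarrow> 'a \<Rightarrow> bool" where
  "maximal C r x \<longleftrightarrow> x \<in> C \<and> (\<forall>y\<in>C. r x y \<longrightarrow> y = x)"

definition continuous_betw ::
  "'a set \<Rightarrow> ('a \<Rightarrow> 'a \<Rightarrow> bool) \<Rightarrow> 'b set \<Rightarrow> ('b \<Rightarrow> 'b \<Rightarrow> bool) \<Rightarrow> ('a \<Rightarrow> 'b) \<Rightarrow> bool" where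
  "continuous_betw C1 r1 C2 r2 f \<longleftrightarrow> (\<forall>x\<in>C1. f x \<in> C2) \<and>
     (\<forall>D. directed C1 r1 D \<longrightarrow> directed C2 r2 (f ` D) \<and>
        (\<forall>u. is_lub C1 r1 D u \<longrightarrow> is_lub C2 r2 (f ` D) (f u)))"

definition regular ::
  "'a set \<Rightarrow> ('a \<Rightarrow> 'a \<Rightarrow> bool) \<Rightarrow> 'b set \<Rightarrow> ('b \<Rightarrow> 'b \<Rightarrow> bool) \<Rightarrow> ('a \<Rightarrow> 'b) \<Rightarrow> bool" where
  "regular C1 r1 C2 r2 f \<longleftrightarrow> (\<forall>x\<in>C1. f x \<in> C2) \<and>
     (\<forall>x\<in>C1. \<forall>y\<in>C1. r1 x y \<longrightarrow> r2 (f x) (f y)) \<and>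
     (\<forall>x. maximal C1 r1 x \<longrightarrow> maximal C2 r2 (f x))"

definition On :: "'o::wellorder \<Rightarrow> 'o set" where
  "On z = {a. a \<le> z}"

definition sized_cpo :: "('a, 'o::wellorder) scpo \<Rightarrow> bool" where
  "sized_cpo S \<longleftrightarrow>
     is_cpo (car S) (le S) \<and>
     sz S ` car S = On (zeta S) \<and>
     continuous_betw (car S) (le S) (On (zeta S)) (\<le>) (sz S) \<and>
     (\<forall>x\<in>car S. sz S x = zeta S \<longleftrightarrow> maximal (car S) (le S) x) \<and>
     (\<forall>a\<in>On (zeta S). \<forall>x\<in>car S. cut S a x \<in> car S) \<and>
     (\<forall>a\<in>On (zeta S). \<forall>b\<in>On (zeta S). \<forall>x\<in>car S. \<forall>y\<in>car S.
         a \<le> b \<longrightarrow> le S x y \<longrightarrow> le S (cut S a x) (cut S b y)) \<and>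
     (\<forall>a\<in>On (zeta S). \<forall>x\<in>car S. a < sz S x \<longrightarrow> sz S (cut S a x) = a) \<and>
     (\<forall>a\<in>On (zeta S). \<forall>x\<in>car S. sz S x \<le> a \<longrightarrow> cut S a x = x)"

text \<open>Finite products of CPOs, tuples represented as lists, ordered componentwise.\<close>
definition prod_car :: "('a, 'o) scpo list \<Rightarrow> 'a list set" where
  "prod_car Ds = {xs. length xs = length Ds \<and> (\<forall>j<length Ds. xs ! j \<in> car (Ds ! j))}"

definition prod_le :: "('a, 'o) scpo list \<Rightarrow> 'a list \<Rightarrow> 'a list \<Rightarrow> bool" where
  "prod_le Ds xs ys \<longleftrightarrow> (\<forall>j<length Ds. le (Ds ! j) (xs ! j) (ys ! j))"

definition max_prod :: "('a, 'o) scpo list \<Rightarrow> 'a list set" where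
  "max_prod Ds = {xs. length xs = length Ds \<and>
     (\<forall>j<length Ds. maximal (car (Ds ! j)) (le (Ds ! j)) (xs ! j))}"

definition max_set :: "('a, 'o) scpo \<Rightarrow> 'a set" where
  "max_set D = {x. maximal (car D) (le D) x}"

definition ord_prod :: "'o::wellorder list \<Rightarrow> 'o list set" where
  "ord_prod zs = {as. length as = length zs \<and> (\<forall>j<length zs. as ! j \<le> zs ! j)}"

definition ord_prod_le :: "'o::wellorder list \<Rightarrow> 'o list \<Rightarrow> 'o list \<Rightarrow> bool" where
  "ord_prod_le zs as bs \<longleftrightarrow> (\<forall>j<length zs. as ! j \<le> bs ! j)"

definition ord_continuous :: "'o::wellorder list \<Rightarrow> 'o \<Rightarrow> ('o list \<Rightarrow> 'o) \<Rightarrow> bool" where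
  "ord_continuous zs z eta \<longleftrightarrow> continuous_betw (ord_prod zs) (ord_prod_le zs) (On z) (\<le>) eta"

text \<open>Production function eta for f : D_1 x ... x D_k -> E (f given on maximal tuples).\<close>
definition production_fun ::
  "('a, 'o::wellorder) scpo list \<Rightarrow> ('a, 'o) scpo \<Rightarrow> ('a list \<Rightarrow> 'a) \<Rightarrow> ('o list \<Rightarrow> 'o) \<Rightarrow> bool" where
  "production_fun Ds E f eta \<longleftrightarrow>
     (\<exists>fs. regular (prod_car Ds) (prod_le Ds) (car E) (le E) fs \<and>
           (\<forall>xs\<in>max_prod Ds. fs xs = f xs) \<and>
           (\<forall>xs\<in>prod_car Ds. eta (map2 (\<lambda>D x. sz D x) Ds xs) = sz E (fs xs)))"

text \<open>f : S -> Q is defined by corecursion from h and gs: the unique function in Q^S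
  (i.e. unique up to values outside S) satisfying the corecursive equation on S.\<close>
definition defined_by_corec ::
  "'x set \<Rightarrow> 'q set \<Rightarrow> ('x \<Rightarrow> 'q list \<Rightarrow> 'q) \<Rightarrow> ('x \<Rightarrow> 'x) list \<Rightarrow> ('x \<Rightarrow> 'q) \<Rightarrow> bool" where
  "defined_by_corec S Q h gs f \<longleftrightarrow>
     (\<forall>x\<in>S. f x \<in> Q) \<and> (\<forall>x\<in>S. f x = h x (map (\<lambda>g. f (g x)) gs)) \<and>
     (\<forall>f'. (\<forall>x\<in>S. f' x \<in> Q) \<and> (\<forall>x\<in>S. f' x = h x (map (\<lambda>g. f' (g x)) gs))
           \<longrightarrow> (\<forall>x\<in>S. f' x = f x))"

end

theory Submission
  imports Defs "HOL-Library.Bourbaki_Witt_Fixpoint"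
begin


lemma On_iff[simp]: "a \<in> On z \<longleftrightarrow> a \<le> z" by (simp add: On_def)

lemma ord_prod_memI: "length a = length zs \<Longrightarrow> (\<And>j. j < length zs \<Longrightarrow> a ! j \<le> zs ! j) \<Longrightarrow> a \<in> ord_prod zs"
  by (simp add: ord_prod_def)

lemma directed_On: "directed (On z) (\<le>) S \<longleftrightarrow> S \<subseteq> On z \<and> S \<noteq> {}"
  unfolding directed_def
  by (metis max.cobounded1 max.cobounded2 max_def)

lemma lub_On_unique: "is_lub (On z) (\<le>) S a \<Longrightarrow> is_lub (On z) (\<le>) S b \<Longrightarrow> a = b"
  unfolding is_lub_def by (meson order_antisym)

lemma lub_ord_prod_comp:
  assumes "is_lub (ord_prod zs) (ord_prod_le zs) D u" "j < length zs"
  shows "is_lub (On (zs!j)) (\<le>) ((\<lambda>d. d!j)`D) (u!j)"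
proof -
  have u: "u \<in> ord_prod zs" "\<forall>d\<in>D. ord_prod_le zs d u"
    "\<forall>v\<in>ord_prod zs. (\<forall>d\<in>D. ord_prod_le zs d v) \<longrightarrow> ord_prod_le zs u v"
    using assms(1) unfolding is_lub_def by auto
  show ?thesis unfolding is_lub_def
  proof (intro conjI ballI impI)
    show "u ! j \<in> On (zs ! j)" using u(1) assms(2) by (simp add: ord_prod_def)
    show "x \<le> u ! j" if "x \<in> (\<lambda>d. d ! j) ` D" for x
      using that u(2) assms(2) by (auto simp: ord_prod_le_def)
    fix v assume v: "v \<in> On (zs ! j)" "\<forall>x\<in>(\<lambda>d. d ! j) ` D. x \<le> v"
    let ?w = "u[j := v]"
    have w: "?w \<in> ord_prod zs" using u(1) v(1) assms(2)
      by (auto simp: ord_prod_def nth_list_update)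
    have "\<forall>d\<in>D. ord_prod_le zs d ?w"
      using u(1,2) v(2) assms(2) by (auto simp: ord_prod_le_def ord_prod_def nth_list_update)
    then have "ord_prod_le zs u ?w" using u(3) w by blast
    then show "u ! j \<le> v" using assms(2) u(1) by (auto simp: ord_prod_le_def ord_prod_def)
  qed
qed

lemma lub_ord_prod_I:
  assumes "u \<in> ord_prod zs" "\<And>j. j < length zs \<Longrightarrow> is_lub (On (zs!j)) (\<le>) ((\<lambda>d. d!j)`D) (u!j)"
  shows "is_lub (ord_prod zs) (ord_prod_le zs) D u"
  unfolding is_lub_def
proof (intro conjI ballI impI)
  show "u \<in> ord_prod zs" by fact
  show "ord_prod_le zs x u" if "x \<in> D" for x
    using assms(2) that unfolding ord_prod_le_def is_lub_def by blast
  fix v assume v: "v \<in> ord_prod zs" "\<forall>x\<in>D. ord_prod_le zs x v"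
  show "ord_prod_le zs u v" unfolding ord_prod_le_def
  proof (intro allI impI)
    fix j assume j: "j < length zs"
    have "v ! j \<in> On (zs ! j)" using v(1) j by (simp add: ord_prod_def)
    moreover have "\<forall>x\<in>(\<lambda>d. d ! j) ` D. x \<le> v ! j" using v(2) j by (auto simp: ord_prod_le_def)
    ultimately show "u ! j \<le> v ! j" using assms(2)[OF j] unfolding is_lub_def by blast
  qed
qed

lemma ord_prod_le_refl: "ord_prod_le zs a a" by (simp add: ord_prod_le_def)

lemma ocont_mono:
  assumes "ord_continuous zs z e" "a \<in> ord_prod zs" "b \<in> ord_prod zs" "ord_prod_le zs a b"
  shows "e a \<le> e b"
proof -
  have d: "directed (ord_prod zs) (ord_prod_le zs) {a, b}"
    using assms by (auto simp: directed_def ord_prod_le_refl)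
  have l: "is_lub (ord_prod zs) (ord_prod_le zs) {a, b} b"
    using assms by (auto simp: is_lub_def ord_prod_le_refl)
  have "is_lub (On z) (\<le>) (e ` {a, b}) (e b)"
    using assms(1) d l unfolding ord_continuous_def continuous_betw_def by blast
  then show ?thesis unfolding is_lub_def by auto
qed

lemma ocont_range: "ord_continuous zs z e \<Longrightarrow> a \<in> ord_prod zs \<Longrightarrow> e a \<le> z"
  unfolding ord_continuous_def continuous_betw_def by auto

lemma ocont_compose:
  assumes e: "ord_continuous ws w e" and psi: "\<And>k. k < length ws \<Longrightarrow> ord_continuous zs (ws!k) (psi k)"
  shows "ord_continuous zs w (\<lambda>a. e (map (\<lambda>k. psi k a) [0..<length ws]))"
proof -
  define T where "T a = map (\<lambda>k. psi k a) [0..<length ws]" for a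
  have T: "T a \<in> ord_prod ws" if "a \<in> ord_prod zs" for a
  proof -
    have "\<forall>k<length ws. psi k a \<le> ws!k" using ocont_range[OF psi] that by blast
    then show ?thesis by (simp add: T_def ord_prod_def)
  qed
  have Tm: "ord_prod_le ws (T a) (T b)" if "a \<in> ord_prod zs" "b \<in> ord_prod zs" "ord_prod_le zs a b" for a b
  proof -
    have "\<forall>k<length ws. psi k a \<le> psi k b" using ocont_mono[OF psi] that by blast
    then show ?thesis by (simp add: T_def ord_prod_le_def)
  qed
  have ec: "\<forall>x\<in>ord_prod ws. e x \<in> On w"
    "\<And>D. directed (ord_prod ws) (ord_prod_le ws) D \<Longrightarrow> directed (On w) (\<le>) (e ` D) \<and>
        (\<forall>u. is_lub (ord_prod ws) (ord_prod_le ws) D u \<longrightarrow> is_lub (On w) (\<le>) (e ` D) (e u))"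
    using e unfolding ord_continuous_def continuous_betw_def by auto
  have main: "directed (On w) (\<le>) ((\<lambda>a. e (T a)) ` D) \<and>
        (\<forall>u. is_lub (ord_prod zs) (ord_prod_le zs) D u \<longrightarrow> is_lub (On w) (\<le>) ((\<lambda>a. e (T a)) ` D) (e (T u)))"
    if D: "directed (ord_prod zs) (ord_prod_le zs) D" for D
  proof -
    have TD: "directed (ord_prod ws) (ord_prod_le ws) (T ` D)"
      unfolding directed_def
    proof (intro conjI ballI)
      have Ds: "D \<subseteq> ord_prod zs" "D \<noteq> {}" "\<forall>x\<in>D. \<forall>y\<in>D. \<exists>z\<in>D. ord_prod_le zs x z \<and> ord_prod_le zs y z"
        using D by (auto simp: directed_def)
      show "T ` D \<subseteq> ord_prod ws" using Ds T by auto
      show "T ` D \<noteq> {}" using Ds by auto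
      fix x y assume "x \<in> T ` D" "y \<in> T ` D"
      then obtain a b where ab: "a \<in> D" "b \<in> D" "x = T a" "y = T b" by auto
      then obtain c where c: "c \<in> D" "ord_prod_le zs a c" "ord_prod_le zs b c" using Ds by blast
      show "\<exists>z\<in>T ` D. ord_prod_le ws x z \<and> ord_prod_le ws y z"
        using ab c Ds Tm by blast
    qed
    have im: "(\<lambda>a. e (T a)) ` D = e ` (T ` D)" by auto
    show ?thesis
    proof (intro conjI allI impI)
      show "directed (On w) (\<le>) ((\<lambda>a. e (T a)) ` D)" using ec(2)[OF TD] im by simp
      fix u assume u: "is_lub (ord_prod zs) (ord_prod_le zs) D u"
      have uin: "u \<in> ord_prod zs" using u by (simp add: is_lub_def)
      have "is_lub (ord_prod ws) (ord_prod_le ws) (T ` D) (T u)"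
      proof (rule lub_ord_prod_I[OF T[OF uin]])
        fix k assume k: "k < length ws"
        have "(\<lambda>d. d ! k) ` T ` D = psi k ` D" using k by (auto simp: T_def image_image)
        moreover have "is_lub (On (ws ! k)) (\<le>) (psi k ` D) (psi k u)"
          using psi[OF k] D u unfolding ord_continuous_def continuous_betw_def by blast
        ultimately show "is_lub (On (ws ! k)) (\<le>) ((\<lambda>d. d ! k) ` T ` D) (T u ! k)"
          using k by (simp add: T_def)
      qed
      then show "is_lub (On w) (\<le>) ((\<lambda>a. e (T a)) ` D) (e (T u))" using ec(2)[OF TD] im by simp
    qed
  qed
  show ?thesis unfolding ord_continuous_def continuous_betw_def
    using ec(1) T main unfolding T_def by blast
qed

lemma ocont_proj: "j < length zs \<Longrightarrow> ord_continuous zs (zs!j) (\<lambda>a. a!j)"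
  unfolding ord_continuous_def continuous_betw_def
  apply (intro conjI allI impI ballI)
    apply (simp add: ord_prod_def)
   apply (unfold directed_On)
   apply (auto simp: directed_def ord_prod_def)[1]
  by (simp add: lub_ord_prod_comp)

lemma ocont_const: "c \<le> z \<Longrightarrow> ord_continuous zs z (\<lambda>_. c)"
  unfolding ord_continuous_def continuous_betw_def
  by (auto simp: directed_On directed_def is_lub_def)

lemma ocont_cong:
  assumes c: "ord_continuous zs z e" and eq: "\<And>a. a \<in> ord_prod zs \<Longrightarrow> e' a = e a"
  shows "ord_continuous zs z e'"
proof -
  have c1: "\<forall>x\<in>ord_prod zs. e x \<in> On z"
    and c2: "\<And>D. directed (ord_prod zs) (ord_prod_le zs) D \<Longrightarrow> directed (On z) (\<le>) (e ` D) \<and>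
        (\<forall>u. is_lub (ord_prod zs) (ord_prod_le zs) D u \<longrightarrow> is_lub (On z) (\<le>) (e ` D) (e u))"
    using c unfolding ord_continuous_def continuous_betw_def by auto
  have im: "e' ` D = e ` D" if "D \<subseteq> ord_prod zs" for D
  proof (rule image_cong[OF refl])
    fix x assume "x \<in> D" then show "e' x = e x" using that eq by blast
  qed
  show ?thesis unfolding ord_continuous_def continuous_betw_def
  proof (intro conjI allI impI ballI)
    fix x assume "x \<in> ord_prod zs" then show "e' x \<in> On z" using c1 eq by simp
  next
    fix D assume D: "directed (ord_prod zs) (ord_prod_le zs) D"
    then have "D \<subseteq> ord_prod zs" by (simp add: directed_def)
    then show "directed (On z) (\<le>) (e' ` D)" using c2[OF D] im by simp
  next
    fix D u assume D: "directed (ord_prod zs) (ord_prod_le zs) D" and u: "is_lub (ord_prod zs) (ord_prod_le zs) D u"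
    have "D \<subseteq> ord_prod zs" using D by (simp add: directed_def)
    moreover have "u \<in> ord_prod zs" using u by (simp add: is_lub_def)
    ultimately show "is_lub (On z) (\<le>) (e' ` D) (e' u)" using c2[OF D] u im eq by simp
  qed
qed

lemma ocont_sup:
  assumes M: "M \<noteq> {}" and c: "\<And>F. F \<in> M \<Longrightarrow> ord_continuous zs z (E F)"
    and l: "\<And>a. a \<in> ord_prod zs \<Longrightarrow> is_lub (On z) (\<le>) ((\<lambda>F. E F a) ` M) (e a)"
  shows "ord_continuous zs z e"
  unfolding ord_continuous_def continuous_betw_def
proof (intro conjI allI impI ballI)
  show "e x \<in> On z" if "x \<in> ord_prod zs" for x using l[OF that] by (simp add: is_lub_def)
  fix D assume D: "directed (ord_prod zs) (ord_prod_le zs) D"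
  then have Ds: "D \<subseteq> ord_prod zs" "D \<noteq> {}" by (auto simp: directed_def)
  show "directed (On z) (\<le>) (e ` D)" unfolding directed_On
    using Ds l by (auto simp: is_lub_def)
  fix u assume u: "is_lub (ord_prod zs) (ord_prod_le zs) D u"
  have uin: "u \<in> ord_prod zs" and ub: "\<forall>d\<in>D. ord_prod_le zs d u" using u by (auto simp: is_lub_def)
  show "is_lub (On z) (\<le>) (e ` D) (e u)" unfolding is_lub_def
  proof (intro conjI ballI impI)
    show "e u \<in> On z" using l[OF uin] by (simp add: is_lub_def)
    fix x assume "x \<in> e ` D"
    then obtain d where d: "d \<in> D" "x = e d" by auto
    have "\<forall>F\<in>M. E F d \<le> e u"
    proof
      fix F assume F: "F \<in> M"
      have "E F d \<le> E F u" using ocont_mono[OF c[OF F]] Ds d uin ub by blast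
      also have "E F u \<le> e u" using l[OF uin] F by (auto simp: is_lub_def)
      finally show "E F d \<le> e u" .
    qed
    then show "x \<le> e u" using l[of d] Ds d \<open>e u \<in> On z\<close> unfolding is_lub_def by blast
  next
    fix v assume v: "v \<in> On z" "\<forall>x\<in>e ` D. x \<le> v"
    have "\<forall>F\<in>M. E F u \<le> v"
    proof
      fix F assume F: "F \<in> M"
      have lu: "is_lub (On z) (\<le>) (E F ` D) (E F u)"
        using c[OF F] D u unfolding ord_continuous_def continuous_betw_def by blast
      have "\<forall>y\<in>E F ` D. y \<le> v"
      proof
        fix y assume "y \<in> E F ` D"
        then obtain d where d: "d \<in> D" "y = E F d" by auto
        have "E F d \<le> e d" using l[of d] Ds d F by (auto simp: is_lub_def)
        also have "e d \<le> v" using v d by auto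
        finally show "y \<le> v" using d by simp
      qed
      then show "E F u \<le> v" using lu v(1) unfolding is_lub_def by blast
    qed
    then show "e u \<le> v" using l[OF uin] v(1) unfolding is_lub_def by blast
  qed
qed




abbreviation szs :: "('a, 'o) scpo list \<Rightarrow> 'a list \<Rightarrow> 'o list" where
  "szs Ds xs \<equiv> map2 (\<lambda>D x. sz D x) Ds xs"

lemma szs_nth: "j < length Ds \<Longrightarrow> j < length xs \<Longrightarrow> szs Ds xs ! j = sz (Ds!j) (xs!j)"
  by simp

lemma szs_append: "length xs = length Ds \<Longrightarrow> szs (Ds @ Es) (xs @ ys) = szs Ds xs @ szs Es ys"
  by simp

lemma szs_replicate: "length ys = m \<Longrightarrow> szs (replicate m B) ys = map (sz B) ys"
  by (rule nth_equalityI) auto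

context
  fixes D :: "('a, 'o::wellorder) scpo"
  assumes S: "sized_cpo D"
begin
lemma sc_parts: "is_cpo (car D) (le D)" "sz D ` car D = On (zeta D)"
  "continuous_betw (car D) (le D) (On (zeta D)) (\<le>) (sz D)"
  "\<forall>x\<in>car D. sz D x = zeta D \<longleftrightarrow> maximal (car D) (le D) x"
  using S unfolding sized_cpo_def apply - apply (elim conjE, assumption)+ done
lemma sc_po: "is_partial_order (car D) (le D)" "\<exists>b\<in>car D. \<forall>x\<in>car D. le D b x"
  "\<forall>X. directed (car D) (le D) X \<longrightarrow> (\<exists>u. is_lub (car D) (le D) X u)"
  using sc_parts(1) unfolding is_cpo_def apply - apply (elim conjE, assumption)+ done
lemma sc_refl: "x \<in> car D \<Longrightarrow> le D x x"
  using sc_po(1) unfolding is_partial_order_def by blast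
lemma sc_antisym: "x \<in> car D \<Longrightarrow> y \<in> car D \<Longrightarrow> le D x y \<Longrightarrow> le D y x \<Longrightarrow> x = y"
  using sc_po(1) unfolding is_partial_order_def by blast
lemma sc_trans: "x \<in> car D \<Longrightarrow> y \<in> car D \<Longrightarrow> z \<in> car D \<Longrightarrow> le D x y \<Longrightarrow> le D y z \<Longrightarrow> le D x z"
  using sc_po(1) unfolding is_partial_order_def by blast
lemma sc_bot: "\<exists>b\<in>car D. \<forall>x\<in>car D. le D b x"
  by (rule sc_po(2))
lemma sc_lub: "directed (car D) (le D) X \<Longrightarrow> \<exists>u. is_lub (car D) (le D) X u"
  using sc_po(3) by blast
lemma sc_sz: "x \<in> car D \<Longrightarrow> sz D x \<le> zeta D"
  using sc_parts(2) by (metis On_iff image_eqI)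
lemma sc_surj: "a \<le> zeta D \<Longrightarrow> \<exists>x\<in>car D. sz D x = a"
  using sc_parts(2) by (metis On_iff imageE)
lemma sc_max: "x \<in> car D \<Longrightarrow> sz D x = zeta D \<longleftrightarrow> maximal (car D) (le D) x"
  using sc_parts(4) by blast
lemma sc_cont: "continuous_betw (car D) (le D) (On (zeta D)) (\<le>) (sz D)"
  by (rule sc_parts(3))
end

lemma max_prod_maximal: "x \<in> max_prod Ds \<Longrightarrow> maximal (prod_car Ds) (prod_le Ds) x"
  unfolding max_prod_def maximal_def prod_car_def prod_le_def
  by (auto intro!: nth_equalityI)

lemma maximal_max_prod:
  assumes S: "\<forall>D\<in>set Ds. sized_cpo D" and x: "maximal (prod_car Ds) (prod_le Ds) x"
  shows "x \<in> max_prod Ds"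
proof -
  have xc: "x \<in> prod_car Ds" and xm: "\<forall>y\<in>prod_car Ds. prod_le Ds x y \<longrightarrow> y = x"
    using x by (auto simp: maximal_def)
  have "maximal (car (Ds!j)) (le (Ds!j)) (x!j)" if j: "j < length Ds" for j
    unfolding maximal_def
  proof (intro conjI ballI impI)
    show "x ! j \<in> car (Ds ! j)" using xc j by (simp add: prod_car_def)
    fix y assume y: "y \<in> car (Ds ! j)" "le (Ds ! j) (x ! j) y"
    have yc: "x[j := y] \<in> prod_car Ds" using xc y j by (auto simp: prod_car_def nth_list_update)
    have "prod_le Ds x (x[j := y])" unfolding prod_le_def
    proof (intro allI impI)
      fix k assume k: "k < length Ds"
      show "le (Ds ! k) (x ! k) (x[j := y] ! k)"
      proof (cases "k = j")
        case True then show ?thesis using y xc j by (simp add: prod_car_def)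
      next
        case False
        have "sized_cpo (Ds!k)" using S k by auto
        then show ?thesis using False xc k by (simp add: prod_car_def sc_refl)
      qed
    qed
    then have "x[j := y] = x" using xm yc by blast
    moreover have "length x = length Ds" using xc by (simp add: prod_car_def)
    ultimately show "y = x ! j" using j by (metis nth_list_update_eq)
  qed
  then show ?thesis using xc by (simp add: max_prod_def prod_car_def)
qed

locale thm_setup =
  fixes As :: "('a, 'o::wellorder) scpo list" and B :: "('a, 'o) scpo"
    and m :: nat and h :: "'a list \<Rightarrow> 'a" and g :: "nat \<Rightarrow> 'a list \<Rightarrow> 'a list"
    and eta_h :: "'o list \<Rightarrow> 'o" and eta_g :: "nat \<Rightarrow> nat \<Rightarrow> 'o list \<Rightarrow> 'o"
    and hs :: "'a list \<Rightarrow> 'a" and gs :: "nat \<Rightarrow> nat \<Rightarrow> 'a list \<Rightarrow> 'a"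
  assumes As_sized: "\<forall>D\<in>set As. sized_cpo D"
    and B_sized: "sized_cpo B"
    and g_type: "\<forall>i<m. \<forall>xs\<in>max_prod As. g i xs \<in> max_prod As"
    and hs_reg: "regular (prod_car (As @ replicate m B)) (prod_le (As @ replicate m B)) (car B) (le B) hs"
    and hs_ext: "\<forall>xs\<in>max_prod (As @ replicate m B). hs xs = h xs"
    and hs_sz: "\<forall>xs\<in>prod_car (As @ replicate m B). eta_h (szs (As @ replicate m B) xs) = sz B (hs xs)"
    and gs: "\<forall>i<m. \<forall>j<length As. regular (prod_car As) (prod_le As) (car (As!j)) (le (As!j)) (gs i j) \<and>
                (\<forall>xs\<in>max_prod As. gs i j xs = g i xs ! j) \<and>
                (\<forall>xs\<in>prod_car As. eta_g i j (szs As xs) = sz (As!j) (gs i j xs))"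
    and eta_h_cond: "\<forall>bs. length bs = m \<and> (\<forall>i<m. bs ! i \<le> zeta B) \<and> (\<exists>i<m. bs ! i < zeta B)
                      \<longrightarrow> Min (set bs) < eta_h (map zeta As @ bs)"
begin

abbreviation "n \<equiv> length As"
abbreviation "pc \<equiv> prod_car As"

lemma Asj: "j < n \<Longrightarrow> sized_cpo (As!j)" using As_sized by auto

definition G :: "nat \<Rightarrow> 'a list \<Rightarrow> 'a list" where
  "G i x = map (\<lambda>j. gs i j x) [0..<n]"

definition Phi :: "('a list \<Rightarrow> 'a) \<Rightarrow> 'a list \<Rightarrow> 'a" where
  "Phi F x = (if x \<in> pc then hs (x @ map (\<lambda>i. F (G i x)) [0..<m]) else undefined)"

definition rep :: "'o list \<Rightarrow> 'a list" where
  "rep a = (SOME x. x \<in> pc \<and> szs As x = a)"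

definition E :: "('a list \<Rightarrow> 'a) \<Rightarrow> 'o list \<Rightarrow> 'o" where
  "E F a = sz B (F (rep a))"

definition Psi :: "('o list \<Rightarrow> 'o) \<Rightarrow> 'o list \<Rightarrow> 'o" where
  "Psi e a = eta_h (a @ map (\<lambda>i. e (map (\<lambda>j. eta_g i j a) [0..<n])) [0..<m])"

definition Cont :: bool where
  "Cont \<longleftrightarrow> ord_continuous (map zeta As @ replicate m (zeta B)) (zeta B) eta_h \<and>
             (\<forall>i<m. \<forall>j<n. ord_continuous (map zeta As) (zeta (As ! j)) (eta_g i j))"

definition inB :: "('a list \<Rightarrow> 'a) \<Rightarrow> bool" where
  "inB F \<longleftrightarrow> (\<forall>x\<in>pc. F x \<in> car B)"

definition monof :: "('a list \<Rightarrow> 'a) \<Rightarrow> bool" where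
  "monof F \<longleftrightarrow> (\<forall>x\<in>pc. \<forall>y\<in>pc. prod_le As x y \<longrightarrow> le B (F x) (F y))"

definition fact :: "('a list \<Rightarrow> 'a) \<Rightarrow> bool" where
  "fact F \<longleftrightarrow> (\<forall>x\<in>pc. \<forall>y\<in>pc. szs As x = szs As y \<longrightarrow> sz B (F x) = sz B (F y))"

definition P :: "('a list \<Rightarrow> 'a) set" where
  "P = {F. inB F \<and> (\<forall>x. x \<notin> pc \<longrightarrow> F x = undefined) \<and> monof F \<and> (\<forall>x\<in>pc. le B (F x) (Phi F x)) \<and>
          fact F \<and> (Cont \<longrightarrow> ord_continuous (map zeta As) (zeta B) (E F))}"

definition leq :: "(('a list \<Rightarrow> 'a) \<times> ('a list \<Rightarrow> 'a)) set" where
  "leq = {(F, F'). F \<in> P \<and> F' \<in> P \<and> (\<forall>x\<in>pc. le B (F x) (F' x))}"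

definition Lub :: "('a list \<Rightarrow> 'a) set \<Rightarrow> 'a list \<Rightarrow> 'a" where
  "Lub M x = (if x \<in> pc then (SOME u. is_lub (car B) (le B) ((\<lambda>F. F x) ` M) u) else undefined)"

definition b0 :: 'a where "b0 = (SOME b. b \<in> car B \<and> (\<forall>x\<in>car B. le B b x))"

definition Bot :: "'a list \<Rightarrow> 'a" where "Bot x = (if x \<in> pc then b0 else undefined)"

lemma b0: "b0 \<in> car B" "\<And>x. x \<in> car B \<Longrightarrow> le B b0 x"
  using someI_ex[OF sc_bot[OF B_sized, unfolded Bex_def]] unfolding b0_def by auto

lemma G_car: "i < m \<Longrightarrow> x \<in> pc \<Longrightarrow> G i x \<in> pc"
  using gs by (auto simp: G_def prod_car_def regular_def)

lemma G_mono: "i < m \<Longrightarrow> x \<in> pc \<Longrightarrow> y \<in> pc \<Longrightarrow> prod_le As x y \<Longrightarrow> prod_le As (G i x) (G i y)"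
  using gs by (auto simp: G_def prod_le_def regular_def)

lemma G_szs: "i < m \<Longrightarrow> x \<in> pc \<Longrightarrow> szs As (G i x) = map (\<lambda>j. eta_g i j (szs As x)) [0..<n]"
  using gs by (auto simp: G_def intro!: nth_equalityI)

lemma G_max: "i < m \<Longrightarrow> x \<in> max_prod As \<Longrightarrow> G i x = g i x"
proof -
  assume i: "i < m" and x: "x \<in> max_prod As"
  have "g i x \<in> max_prod As" using g_type i x by blast
  then have "length (g i x) = n" by (simp add: max_prod_def)
  then show ?thesis using gs i x by (auto simp: G_def intro!: nth_equalityI)
qed

lemma app_car: "x \<in> pc \<Longrightarrow> length ys = m \<Longrightarrow> \<forall>i<m. ys ! i \<in> car B \<Longrightarrow> x @ ys \<in> prod_car (As @ replicate m B)"
  by (auto simp: prod_car_def nth_append)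

lemma app_le: "x \<in> pc \<Longrightarrow> y \<in> pc \<Longrightarrow> prod_le As x y \<Longrightarrow> length ys = m \<Longrightarrow> length ys' = m \<Longrightarrow>
   \<forall>i<m. le B (ys ! i) (ys' ! i) \<Longrightarrow> prod_le (As @ replicate m B) (x @ ys) (y @ ys')"
  by (auto simp: prod_car_def prod_le_def nth_append)

lemma app_max: "x \<in> max_prod As \<Longrightarrow> length ys = m \<Longrightarrow> \<forall>i<m. maximal (car B) (le B) (ys ! i) \<Longrightarrow>
   x @ ys \<in> max_prod (As @ replicate m B)"
  by (auto simp: max_prod_def nth_append)

lemma app_szs: "x \<in> pc \<Longrightarrow> length ys = m \<Longrightarrow> szs (As @ replicate m B) (x @ ys) = szs As x @ map (sz B) ys"
  by (simp add: prod_car_def szs_replicate del: map2_map_map)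

lemma hs_app_sz: "x \<in> pc \<Longrightarrow> length ys = m \<Longrightarrow> \<forall>i<m. ys ! i \<in> car B \<Longrightarrow>
    sz B (hs (x @ ys)) = eta_h (szs As x @ map (sz B) ys)"
proof -
  assume a: "x \<in> pc" "length ys = m" "\<forall>i<m. ys ! i \<in> car B"
  have "eta_h (szs (As @ replicate m B) (x @ ys)) = sz B (hs (x @ ys))" using hs_sz app_car[OF a] by blast
  moreover have "szs (As @ replicate m B) (x @ ys) = szs As x @ map (sz B) ys" by (rule app_szs[OF a(1,2)])
  ultimately show ?thesis by simp
qed

lemma szs_ord: "x \<in> pc \<Longrightarrow> szs As x \<in> ord_prod (map zeta As)"
  using As_sized by (auto simp: ord_prod_def prod_car_def intro!: sc_sz)

lemma rep: assumes a: "a \<in> ord_prod (map zeta As)" shows "rep a \<in> pc" "szs As (rep a) = a"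
proof -
  define x where "x = map (\<lambda>j. SOME y. y \<in> car (As!j) \<and> sz (As!j) y = a!j) [0..<n]"
  have "\<exists>y. y \<in> car (As!j) \<and> sz (As!j) y = a!j" if "j < n" for j
    using sc_surj[OF Asj[OF that]] a that by (auto simp: ord_prod_def)
  then have "\<And>j. j < n \<Longrightarrow> (SOME y. y \<in> car (As!j) \<and> sz (As!j) y = a!j) \<in> car (As!j) \<and>
       sz (As!j) (SOME y. y \<in> car (As!j) \<and> sz (As!j) y = a!j) = a!j"
    by (rule someI_ex)
  then have "x \<in> pc \<and> szs As x = a" using a
    by (auto simp: x_def prod_car_def ord_prod_def intro!: nth_equalityI)
  then have "rep a \<in> pc \<and> szs As (rep a) = a" unfolding rep_def by (rule someI)
  then show "rep a \<in> pc" "szs As (rep a) = a" by auto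
qed

lemma E_fact: "fact F \<Longrightarrow> x \<in> pc \<Longrightarrow> E F (szs As x) = sz B (F x)"
  unfolding E_def fact_def using rep[OF szs_ord] by metis

lemma Phi_car: "inB F \<Longrightarrow> x \<in> pc \<Longrightarrow> Phi F x \<in> car B"
  using hs_reg G_car app_car unfolding Phi_def inB_def regular_def by simp

lemma Phi_inB: "inB F \<Longrightarrow> inB (Phi F)"
  using Phi_car by (simp add: inB_def)

lemma Phi_mono_arg: "inB F \<Longrightarrow> monof F \<Longrightarrow> monof (Phi F)"
  unfolding monof_def
proof (intro ballI impI)
  fix x y assume F: "inB F" "\<forall>x\<in>pc. \<forall>y\<in>pc. prod_le As x y \<longrightarrow> le B (F x) (F y)"
    and xy: "x \<in> pc" "y \<in> pc" "prod_le As x y"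
  have "prod_le (As @ replicate m B) (x @ map (\<lambda>i. F (G i x)) [0..<m]) (y @ map (\<lambda>i. F (G i y)) [0..<m])"
    using xy F G_car G_mono by (intro app_le) auto
  moreover have "x @ map (\<lambda>i. F (G i x)) [0..<m] \<in> prod_car (As @ replicate m B)"
    "y @ map (\<lambda>i. F (G i y)) [0..<m] \<in> prod_car (As @ replicate m B)"
    using xy F G_car by (auto intro!: app_car simp: inB_def)
  ultimately show "le B (Phi F x) (Phi F y)"
    using hs_reg xy unfolding regular_def Phi_def by simp
qed

lemma Phi_mono_fun: "inB F \<Longrightarrow> inB F' \<Longrightarrow> \<forall>x\<in>pc. le B (F x) (F' x) \<Longrightarrow> x \<in> pc \<Longrightarrow> le B (Phi F x) (Phi F' x)"
proof -
  assume F: "inB F" "inB F'" "\<forall>x\<in>pc. le B (F x) (F' x)" and x: "x \<in> pc"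
  have "prod_le As x x" using x As_sized by (auto simp: prod_le_def prod_car_def intro: sc_refl)
  then have "prod_le (As @ replicate m B) (x @ map (\<lambda>i. F (G i x)) [0..<m]) (x @ map (\<lambda>i. F' (G i x)) [0..<m])"
    using x F G_car by (intro app_le) auto
  moreover have "x @ map (\<lambda>i. F (G i x)) [0..<m] \<in> prod_car (As @ replicate m B)"
    "x @ map (\<lambda>i. F' (G i x)) [0..<m] \<in> prod_car (As @ replicate m B)"
    using x F G_car by (auto intro!: app_car simp: inB_def)
  ultimately show "le B (Phi F x) (Phi F' x)"
    using hs_reg x unfolding regular_def Phi_def by simp
qed

lemma Phi_sz: "inB F \<Longrightarrow> fact F \<Longrightarrow> x \<in> pc \<Longrightarrow> sz B (Phi F x) = Psi (E F) (szs As x)"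
proof -
  assume F: "inB F" "fact F" and x: "x \<in> pc"
  have c: "x @ map (\<lambda>i. F (G i x)) [0..<m] \<in> prod_car (As @ replicate m B)"
    using x F G_car by (auto intro!: app_car simp: inB_def)
  have "sz B (Phi F x) = eta_h (szs As x @ map (sz B) (map (\<lambda>i. F (G i x)) [0..<m]))"
    using hs_app_sz[OF x, of "map (\<lambda>i. F (G i x)) [0..<m]"] x F G_car by (simp add: Phi_def inB_def)
  also have "map (sz B) (map (\<lambda>i. F (G i x)) [0..<m]) =
      map (\<lambda>i. E F (map (\<lambda>j. eta_g i j (szs As x)) [0..<n])) [0..<m]"
    using E_fact[OF F(2) G_car] G_szs x by auto
  finally show ?thesis by (simp add: Psi_def)
qed

lemma Psi_cont:
  assumes C: Cont and e: "ord_continuous (map zeta As) (zeta B) e"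
  shows "ord_continuous (map zeta As) (zeta B) (Psi e)"
proof -
  define ws where "ws = map zeta As @ replicate m (zeta B)"
  define psi where "psi k a = (if k < n then a ! k else e (map (\<lambda>j. eta_g (k - n) j a) [0..<n]))" for k a
  have hc: "ord_continuous ws (zeta B) eta_h" using C by (simp add: Cont_def ws_def)
  have pc: "ord_continuous (map zeta As) (ws ! k) (psi k)" if k: "k < length ws" for k
  proof (cases "k < n")
    case True
    have "psi k = (\<lambda>a. a ! k)" using True by (simp add: psi_def fun_eq_iff)
    moreover have "ws ! k = map zeta As ! k" using True by (simp add: ws_def nth_append)
    ultimately show ?thesis using ocont_proj[of k "map zeta As"] True by simp
  next
    case False
    have i: "k - n < m" using k False by (simp add: ws_def)
    have "ord_continuous (map zeta As) (zeta B)
        (\<lambda>a. e (map (\<lambda>j. eta_g (k - n) j a) [0..<length (map zeta As)]))"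
      by (rule ocont_compose[OF e]) (use C i in \<open>auto simp: Cont_def\<close>)
    moreover have "psi k = (\<lambda>a. e (map (\<lambda>j. eta_g (k - n) j a) [0..<length (map zeta As)]))"
      using False by (simp add: psi_def fun_eq_iff)
    moreover have "ws ! k = zeta B" using False k by (simp add: ws_def nth_append)
    ultimately show ?thesis by simp
  qed
  have "ord_continuous (map zeta As) (zeta B) (\<lambda>a. eta_h (map (\<lambda>k. psi k a) [0..<length ws]))"
    by (rule ocont_compose[OF hc pc])
  then show ?thesis
  proof (rule ocont_cong)
    fix a assume a: "a \<in> ord_prod (map zeta As)"
    then have la: "length a = n" by (simp add: ord_prod_def)
    have "map (\<lambda>k. psi k a) [0..<length ws] = a @ map (\<lambda>i. e (map (\<lambda>j. eta_g i j a) [0..<n])) [0..<m]"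
      using la by (auto simp: ws_def psi_def nth_append intro!: nth_equalityI)
    then show "Psi e a = eta_h (map (\<lambda>k. psi k a) [0..<length ws])" by (simp add: Psi_def)
  qed
qed

lemma E_Phi: "inB F \<Longrightarrow> fact F \<Longrightarrow> a \<in> ord_prod (map zeta As) \<Longrightarrow> E (Phi F) a = Psi (E F) a"
  using Phi_sz rep by (simp add: E_def)

lemma Phi_P: assumes F: "F \<in> P" shows "Phi F \<in> P"
proof -
  have F': "inB F" "monof F" "\<forall>x\<in>pc. le B (F x) (Phi F x)" "fact F"
     "Cont \<longrightarrow> ord_continuous (map zeta As) (zeta B) (E F)" using F by (auto simp: P_def)
  have "fact (Phi F)" unfolding fact_def using Phi_sz[OF F'(1,4)] by simp
  moreover have "Cont \<longrightarrow> ord_continuous (map zeta As) (zeta B) (E (Phi F))"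
    using Psi_cont F'(5) E_Phi[OF F'(1,4)] by (metis ocont_cong)
  moreover have "\<forall>x\<in>pc. le B (Phi F x) (Phi (Phi F) x)"
    using Phi_mono_fun[OF F'(1) Phi_inB[OF F'(1)] F'(3)] by blast
  ultimately show ?thesis using Phi_inB[OF F'(1)] Phi_mono_arg[OF F'(1,2)]
    by (auto simp: P_def Phi_def)
qed

lemma Chains_P: "M \<in> Chains leq \<Longrightarrow> M \<subseteq> P"
  unfolding Chains_def leq_def by blast

lemma Lub_lub: assumes M: "M \<in> Chains leq" "M \<noteq> {}" and x: "x \<in> pc"
  shows "is_lub (car B) (le B) ((\<lambda>F. F x) ` M) (Lub M x)"
proof -
  have MP: "M \<subseteq> P" using Chains_P M by blast
  have d: "directed (car B) (le B) ((\<lambda>F. F x) ` M)" unfolding directed_def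
  proof (intro conjI ballI)
    show "(\<lambda>F. F x) ` M \<subseteq> car B" using MP x by (auto simp: P_def inB_def)
    show "(\<lambda>F. F x) ` M \<noteq> {}" using M by auto
    fix a b assume "a \<in> (\<lambda>F. F x) ` M" "b \<in> (\<lambda>F. F x) ` M"
    then obtain F F' where FF: "F \<in> M" "F' \<in> M" "a = F x" "b = F' x" by auto
    have inc: "F x \<in> car B" "F' x \<in> car B" using FF MP x by (auto simp: P_def inB_def)
    from M(1) FF have "(F, F') \<in> leq \<or> (F', F) \<in> leq" by (auto simp: Chains_def)
    then show "\<exists>z\<in>(\<lambda>F. F x) ` M. le B a z \<and> le B b z"
      using inc FF x sc_refl[OF B_sized] unfolding leq_def by blast
  qed
  show ?thesis using someI_ex[OF sc_lub[OF B_sized d]] x by (simp add: Lub_def)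
qed

lemma Lub_P: assumes M: "M \<in> Chains leq" "M \<noteq> {}" shows "Lub M \<in> P"
proof -
  have MP: "M \<subseteq> P" using Chains_P M by blast
  note L = Lub_lub[OF M]
  have inB: "inB (Lub M)" using L by (auto simp: inB_def is_lub_def)
  have ub: "le B (F x) (Lub M x)" if "F \<in> M" "x \<in> pc" for F x using L[OF that(2)] that(1) by (auto simp: is_lub_def)
  have least: "le B (Lub M x) v" if "x \<in> pc" "v \<in> car B" "\<forall>F\<in>M. le B (F x) v" for x v
    using L[OF that(1)] that by (auto simp: is_lub_def)
  have mono: "monof (Lub M)" unfolding monof_def
  proof (intro ballI impI)
    fix x y assume xy: "x \<in> pc" "y \<in> pc" "prod_le As x y"
    show "le B (Lub M x) (Lub M y)"
    proof (rule least[OF xy(1)])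
      show "Lub M y \<in> car B" using inB xy by (simp add: inB_def)
      show "\<forall>F\<in>M. le B (F x) (Lub M y)"
      proof
        fix F assume F: "F \<in> M"
        have "le B (F x) (F y)" using F MP xy by (auto simp: P_def monof_def)
        moreover have Fxy: "F x \<in> car B" "F y \<in> car B" using F MP xy by (auto simp: P_def inB_def)
        ultimately show "le B (F x) (Lub M y)"
          using sc_trans[OF B_sized Fxy \<open>Lub M y \<in> car B\<close>] ub[OF F xy(2)] by blast
      qed
    qed
  qed
  have post: "\<forall>x\<in>pc. le B (Lub M x) (Phi (Lub M) x)"
  proof
    fix x assume x: "x \<in> pc"
    show "le B (Lub M x) (Phi (Lub M) x)"
    proof (rule least[OF x Phi_car[OF inB x]], rule ballI)
      fix F assume F: "F \<in> M"
      have Fp: "F \<in> P" using F MP by auto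
      have FinB: "inB F" using Fp by (simp add: P_def)
      have "le B (F x) (Phi F x)" using Fp x by (simp add: P_def)
      moreover have "le B (Phi F x) (Phi (Lub M) x)"
        by (rule Phi_mono_fun[OF FinB inB _ x]) (use ub[OF F] in blast)
      moreover have "F x \<in> car B" using FinB x by (simp add: inB_def)
      ultimately show "le B (F x) (Phi (Lub M) x)"
        using sc_trans[OF B_sized _ Phi_car[OF FinB x] Phi_car[OF inB x]] by blast
    qed
  qed
  have szl: "is_lub (On (zeta B)) (\<le>) ((\<lambda>F. sz B (F x)) ` M) (sz B (Lub M x))" if x: "x \<in> pc" for x
  proof -
    have d: "directed (car B) (le B) ((\<lambda>F. F x) ` M)"
      unfolding directed_def
    proof (intro conjI ballI)
      show "(\<lambda>F. F x) ` M \<subseteq> car B" using MP x by (auto simp: P_def inB_def)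
      show "(\<lambda>F. F x) ` M \<noteq> {}" using M by auto
      fix a b assume "a \<in> (\<lambda>F. F x) ` M" "b \<in> (\<lambda>F. F x) ` M"
      then obtain F F' where FF: "F \<in> M" "F' \<in> M" "a = F x" "b = F' x" by auto
      have inc: "F x \<in> car B" "F' x \<in> car B" using FF MP x by (auto simp: P_def inB_def)
      from M(1) FF have "(F, F') \<in> leq \<or> (F', F) \<in> leq" by (auto simp: Chains_def)
      then show "\<exists>z\<in>(\<lambda>F. F x) ` M. le B a z \<and> le B b z"
        using inc FF x sc_refl[OF B_sized] unfolding leq_def by blast
    qed
    have "is_lub (On (zeta B)) (\<le>) (sz B ` (\<lambda>F. F x) ` M) (sz B (Lub M x))"
      using sc_cont[OF B_sized] d L[OF x] unfolding continuous_betw_def by blast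
    then show ?thesis by (simp add: image_image)
  qed
  have fact: "fact (Lub M)" unfolding fact_def
  proof (intro ballI impI)
    fix x y assume xy: "x \<in> pc" "y \<in> pc" "szs As x = szs As y"
    have "(\<lambda>F. sz B (F x)) ` M = (\<lambda>F. sz B (F y)) ` M"
    proof (rule image_cong[OF refl])
      fix F assume "F \<in> M"
      then have "fact F" using MP by (auto simp: P_def)
      then show "sz B (F x) = sz B (F y)" using xy unfolding fact_def by blast
    qed
    then show "sz B (Lub M x) = sz B (Lub M y)"
      using szl[OF xy(1)] szl[OF xy(2)] by (intro lub_On_unique) auto
  qed
  have cont: "Cont \<longrightarrow> ord_continuous (map zeta As) (zeta B) (E (Lub M))"
  proof
    assume C: Cont
    show "ord_continuous (map zeta As) (zeta B) (E (Lub M))"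
    proof (rule ocont_sup[OF M(2)])
      show "ord_continuous (map zeta As) (zeta B) (E F)" if "F \<in> M" for F using that MP C by (auto simp: P_def)
      fix a assume a: "a \<in> ord_prod (map zeta As)"
      show "is_lub (On (zeta B)) (\<le>) ((\<lambda>F. E F a) ` M) (E (Lub M) a)"
        using szl[OF rep(1)[OF a]] by (simp add: E_def)
    qed
  qed
  have outs: "\<forall>x. x \<notin> pc \<longrightarrow> Lub M x = undefined" by (simp add: Lub_def)
  show ?thesis unfolding P_def by (rule CollectI, intro conjI inB mono post fact cont outs)
qed

lemma Field_leq: "Field leq = P"
proof -
  have "F \<in> P \<Longrightarrow> (F, F) \<in> leq" for F
    by (auto simp: leq_def P_def inB_def intro: sc_refl[OF B_sized])
  then show ?thesis unfolding Field_def leq_def by auto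
qed

lemma BW: "bourbaki_witt_fixpoint Lub leq Phi"
proof
  show "Partial_order leq" unfolding Field_leq order_on_defs
  proof (intro conjI)
    show "leq \<subseteq> P \<times> P" by (auto simp: leq_def)
    show "refl_on P leq" unfolding refl_on_def
      by (auto simp: leq_def P_def inB_def intro: sc_refl[OF B_sized])
    show "trans leq" unfolding trans_def leq_def
      by (auto simp: P_def inB_def intro: sc_trans[OF B_sized])
    show "antisym leq" unfolding antisym_def leq_def
    proof (clarsimp)
      fix F F' assume F: "F \<in> P" "F' \<in> P" "\<forall>x\<in>pc. le B (F x) (F' x)" "\<forall>x\<in>pc. le B (F' x) (F x)"
      show "F = F'"
      proof
        fix x show "F x = F' x"
        proof (cases "x \<in> pc")
          case True then show ?thesis using F sc_antisym[OF B_sized] by (auto simp: P_def inB_def)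
        next
          case False then show ?thesis using F by (auto simp: P_def)
        qed
      qed
    qed
  qed
next
  fix M z assume M: "M \<in> Chains leq" "M \<noteq> {}" "\<And>x. x \<in> M \<Longrightarrow> (x, z) \<in> leq"
  have zP: "z \<in> P" using M by (auto simp: leq_def)
  show "(Lub M, z) \<in> leq" unfolding leq_def
    using Lub_P[OF M(1,2)] zP Lub_lub[OF M(1,2)] M(3) by (auto simp: is_lub_def leq_def P_def inB_def)
next
  fix M F assume M: "M \<in> Chains leq" "F \<in> M"
  then have Mn: "M \<noteq> {}" by auto
  have FP: "F \<in> P" using Chains_P[OF M(1)] M(2) by auto
  have "\<forall>x\<in>pc. le B (F x) (Lub M x)" using Lub_lub[OF M(1) Mn] M(2) by (auto simp: is_lub_def)
  then show "(F, Lub M) \<in> leq" using Lub_P[OF M(1) Mn] FP by (auto simp: leq_def)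
next
  fix M assume "M \<in> Chains leq" "M \<noteq> {}"
  then show "Lub M \<in> Field leq" using Lub_P Field_leq by auto
next
  fix F assume "F \<in> Field leq"
  then have F: "F \<in> P" using Field_leq by auto
  have post: "\<forall>x\<in>pc. le B (F x) (Phi F x)" using F unfolding P_def by blast
  show "(F, Phi F) \<in> leq" unfolding leq_def using F Phi_P[OF F] post by simp
qed

lemma Bot_P: "Bot \<in> P"
proof -
  have inB: "inB Bot" using b0 by (simp add: inB_def Bot_def)
  have "fact Bot" by (simp add: fact_def Bot_def)
  moreover have "E Bot a = sz B b0" if "a \<in> ord_prod (map zeta As)" for a
    using rep[OF that] by (simp add: E_def Bot_def)
  then have "ord_continuous (map zeta As) (zeta B) (E Bot)"
    using ocont_cong[OF ocont_const[OF sc_sz[OF B_sized b0(1)]]] by blast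
  moreover have "\<forall>x\<in>pc. le B (Bot x) (Phi Bot x)"
    using b0 Phi_car[OF inB] by (simp add: Bot_def)
  moreover have "monof Bot" using b0 sc_refl[OF B_sized] by (simp add: monof_def Bot_def)
  moreover have "\<forall>x. x \<notin> pc \<longrightarrow> Bot x = undefined" by (simp add: Bot_def)
  ultimately show ?thesis unfolding P_def by (intro CollectI conjI inB impI) auto
qed

lemma fixp: "\<exists>F\<in>P. Phi F = F"
  using bourbaki_witt_fixpoint.fixp_above_Field[OF BW, of Bot]
    bourbaki_witt_fixpoint.fixp_above_unfold[OF BW, of Bot] Bot_P Field_leq by metis

lemma main:
  assumes f_corec: "defined_by_corec (max_prod As) (max_set B) (\<lambda>xs ys. h (xs @ ys)) (map g [0..<m]) f"
  shows "\<exists>eta_f. production_fun As B f eta_f \<and>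
           (\<forall>as\<in>ord_prod (map zeta As). eta_f as = Psi eta_f as) \<and>
           (Cont \<longrightarrow> ord_continuous (map zeta As) (zeta B) eta_f)"
proof -
  obtain F where FP: "F \<in> P" and Ffix: "Phi F = F" using fixp by blast
  have F': "inB F" "monof F" "fact F" "Cont \<longrightarrow> ord_continuous (map zeta As) (zeta B) (E F)"
    using FP by (auto simp: P_def)
  have Fx: "F x = hs (x @ map (\<lambda>i. F (G i x)) [0..<m])" if "x \<in> pc" for x
    using that Ffix by (metis Phi_def)
  have maxpc: "x \<in> pc" if "x \<in> max_prod As" for x
    using that by (auto simp: max_prod_def prod_car_def maximal_def)
  have szmax: "szs As x = map zeta As" if "x \<in> max_prod As" for x
    using that As_sized by (auto simp: max_prod_def maximal_def intro!: nth_equalityI sc_max[THEN iffD2])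
  define beta where "beta = E F (map zeta As)"
  have szF: "sz B (F x) = beta" if "x \<in> max_prod As" for x
    using E_fact[OF F'(3) maxpc[OF that]] szmax[OF that] by (simp add: beta_def)
  have maxF: "maximal (car B) (le B) (F x)" if x: "x \<in> max_prod As" for x
  proof -
    have xc: "x \<in> pc" using maxpc[OF x] .
    have Gm: "G i x \<in> max_prod As" if "i < m" for i using G_max[OF that x] g_type that x by auto
    have c: "x @ map (\<lambda>i. F (G i x)) [0..<m] \<in> prod_car (As @ replicate m B)"
      using xc F' G_car by (auto intro!: app_car simp: inB_def)
    have "beta = sz B (F x)" using szF[OF x] by simp
    also have "\<dots> = eta_h (szs As x @ map (sz B) (map (\<lambda>i. F (G i x)) [0..<m]))"
      using hs_app_sz[OF xc, of "map (\<lambda>i. F (G i x)) [0..<m]"] xc F' G_car Fx[OF xc] by (simp add: inB_def)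
    also have "map (sz B) (map (\<lambda>i. F (G i x)) [0..<m]) = replicate m beta"
      using szF Gm by (auto intro!: nth_equalityI)
    finally have beq: "beta = eta_h (map zeta As @ replicate m beta)" using szmax[OF x] by simp
    have ble: "beta \<le> zeta B" using sc_sz[OF B_sized] F' xc szF[OF x] by (metis inB_def)
    have "beta = zeta B"
    proof (rule ccontr)
      assume "beta \<noteq> zeta B"
      then have lt: "beta < zeta B" using ble by simp
      show False
      proof (cases "m = 0")
        case True
        have "x @ map (\<lambda>i. F (G i x)) [0..<m] = x" using True by simp
        moreover have "x \<in> max_prod (As @ replicate m B)" using x True by simp
        ultimately have "maximal (car B) (le B) (F x)"
          using hs_reg Fx[OF xc] max_prod_maximal unfolding regular_def by metis
        then have "sz B (F x) = zeta B" using sc_max[OF B_sized] F' xc by (auto simp: inB_def)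
        then show False using lt szF[OF x] by simp
      next
        case False
        have "Min (set (replicate m beta)) < eta_h (map zeta As @ replicate m beta)"
        proof (rule eta_h_cond[rule_format])
          show "length (replicate m beta) = m \<and> (\<forall>i<m. replicate m beta ! i \<le> zeta B) \<and> (\<exists>i<m. replicate m beta ! i < zeta B)"
            using False lt ble by auto
        qed
        moreover have "Min (set (replicate m beta)) = beta" using False by simp
        ultimately show False using beq by simp
      qed
    qed
    then show ?thesis using szF[OF x] sc_max[OF B_sized] F' xc by (auto simp: inB_def)
  qed
  have Feq: "\<forall>x\<in>max_prod As. F x = f x"
  proof -
    have "\<forall>x\<in>max_prod As. F x \<in> max_set B" using maxF by (simp add: max_set_def)
    moreover have "\<forall>x\<in>max_prod As. F x = h (x @ map (\<lambda>g. F (g x)) (map g [0..<m]))"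
    proof
      fix x assume x: "x \<in> max_prod As"
      have e: "map (\<lambda>g. F (g x)) (map g [0..<m]) = map (\<lambda>i. F (G i x)) [0..<m]"
        using G_max[OF _ x] by simp
      have mx: "x @ map (\<lambda>i. F (G i x)) [0..<m] \<in> max_prod (As @ replicate m B)"
        using x maxF G_max g_type by (intro app_max) auto
      have "F x = hs (x @ map (\<lambda>i. F (G i x)) [0..<m])" by (rule Fx[OF maxpc[OF x]])
      also have "\<dots> = h (x @ map (\<lambda>i. F (G i x)) [0..<m])" using hs_ext mx by blast
      also have "\<dots> = h (x @ map (\<lambda>g. F (g x)) (map g [0..<m]))" by (simp only: e)
      finally show "F x = h (x @ map (\<lambda>g. F (g x)) (map g [0..<m]))" .
    qed
    ultimately show ?thesis using f_corec unfolding defined_by_corec_def by blast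
  qed
  have prod: "production_fun As B f (E F)" unfolding production_fun_def
  proof (intro exI conjI)
    show "regular pc (prod_le As) (car B) (le B) F"
      unfolding regular_def using F' maxF maximal_max_prod[OF As_sized]
      by (auto simp: inB_def monof_def)
    show "\<forall>xs\<in>max_prod As. F xs = f xs" by (rule Feq)
    show "\<forall>xs\<in>pc. E F (szs As xs) = sz B (F xs)" using E_fact[OF F'(3)] by blast
  qed
  have eq: "\<forall>as\<in>ord_prod (map zeta As). E F as = Psi (E F) as"
    using E_Phi[OF F'(1,3)] Ffix by metis
  show ?thesis using prod eq F'(4) by blast
qed

end


theorem theorem4p13:
  fixes As :: "('a, 'o::wellorder) scpo list" and B :: "('a, 'o) scpo"
    and m :: nat and h :: "'a list \<Rightarrow> 'a" and g :: "nat \<Rightarrow> 'a list \<Rightarrow> 'a list"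
    and eta_h :: "'o list \<Rightarrow> 'o" and eta_g :: "nat \<Rightarrow> nat \<Rightarrow> 'o list \<Rightarrow> 'o"
    and f :: "'a list \<Rightarrow> 'a"
  assumes As_sized: "\<forall>D\<in>set As. sized_cpo D"
    and B_sized: "sized_cpo B"
    and h_type: "\<forall>xs\<in>max_prod (As @ replicate m B). h xs \<in> max_set B"
    and g_type: "\<forall>i<m. \<forall>xs\<in>max_prod As. g i xs \<in> max_prod As"
    and eta_h_prod: "production_fun (As @ replicate m B) B h eta_h"
    and eta_g_prod: "\<forall>i<m. \<forall>j<length As. production_fun As (As ! j) (\<lambda>xs. g i xs ! j) (eta_g i j)"
    and eta_h_cond: "\<forall>bs. length bs = m \<and> (\<forall>i<m. bs ! i \<le> zeta B) \<and> (\<exists>i<m. bs ! i < zeta B)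
                      \<longrightarrow> Min (set bs) < eta_h (map zeta As @ bs)"
    and f_corec: "defined_by_corec (max_prod As) (max_set B) (\<lambda>xs ys. h (xs @ ys)) (map g [0..<m]) f"
  shows "\<exists>eta_f. production_fun As B f eta_f \<and>
           (\<forall>as\<in>ord_prod (map zeta As).
              eta_f as = eta_h (as @ map (\<lambda>i. eta_f (map (\<lambda>j. eta_g i j as) [0..<length As])) [0..<m])) \<and>
           ((ord_continuous (map zeta As @ replicate m (zeta B)) (zeta B) eta_h \<and>
             (\<forall>i<m. \<forall>j<length As. ord_continuous (map zeta As) (zeta (As ! j)) (eta_g i j)))
            \<longrightarrow> ord_continuous (map zeta As) (zeta B) eta_f)"
  proof -
  obtain hs where hs: "regular (prod_car (As @ replicate m B)) (prod_le (As @ replicate m B)) (car B) (le B) hs"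
    "\<forall>xs\<in>max_prod (As @ replicate m B). hs xs = h xs"
    "\<forall>xs\<in>prod_car (As @ replicate m B). eta_h (map2 (\<lambda>D x. sz D x) (As @ replicate m B) xs) = sz B (hs xs)"
    using eta_h_prod unfolding production_fun_def by blast
  define Q where "Q i j fs \<longleftrightarrow> regular (prod_car As) (prod_le As) (car (As!j)) (le (As!j)) fs \<and>
                (\<forall>xs\<in>max_prod As. fs xs = g i xs ! j) \<and>
                (\<forall>xs\<in>prod_car As. eta_g i j (map2 (\<lambda>D x. sz D x) As xs) = sz (As!j) (fs xs))" for i j fs
  define gs where "gs i j = (SOME fs. Q i j fs)" for i j
  have "\<exists>fs. Q i j fs" if "i < m" "j < length As" for i j
    using eta_g_prod that unfolding production_fun_def Q_def by blast
  then have gsQ: "\<forall>i<m. \<forall>j<length As. Q i j (gs i j)" unfolding gs_def by (metis someI_ex)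
  have loc: "thm_setup As B m h g eta_h eta_g hs gs"
  proof
    show "\<forall>D\<in>set As. sized_cpo D" by (rule As_sized)
    show "sized_cpo B" by (rule B_sized)
    show "\<forall>i<m. \<forall>xs\<in>max_prod As. g i xs \<in> max_prod As" by (rule g_type)
    show "regular (prod_car (As @ replicate m B)) (prod_le (As @ replicate m B)) (car B) (le B) hs" by (rule hs(1))
    show "\<forall>xs\<in>max_prod (As @ replicate m B). hs xs = h xs" by (rule hs(2))
    show "\<forall>xs\<in>prod_car (As @ replicate m B). eta_h (map2 (\<lambda>D x. sz D x) (As @ replicate m B) xs) = sz B (hs xs)" by (rule hs(3))
    show "\<forall>i<m. \<forall>j<length As. regular (prod_car As) (prod_le As) (car (As!j)) (le (As!j)) (gs i j) \<and>
                (\<forall>xs\<in>max_prod As. gs i j xs = g i xs ! j) \<and>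
                (\<forall>xs\<in>prod_car As. eta_g i j (map2 (\<lambda>D x. sz D x) As xs) = sz (As!j) (gs i j xs))"
      using gsQ unfolding Q_def by blast
    show "\<forall>bs. length bs = m \<and> (\<forall>i<m. bs ! i \<le> zeta B) \<and> (\<exists>i<m. bs ! i < zeta B)
                      \<longrightarrow> Min (set bs) < eta_h (map zeta As @ bs)" by (rule eta_h_cond)
  qed
  interpret thm_setup As B m h g eta_h eta_g hs gs by (rule loc)
  show ?thesis using main[OF f_corec] unfolding Psi_def Cont_def by blast
qed

end
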